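(* The class of unit-distance graphs is $(6,1)$-disjointness-expressing.
   Context: A unit-distance graph is a graph whose vertices are points in the plane, two points being adjacent iff their Euclidean distance equals 1. A class $\mathcal{C}$ of graphs is $(s,\kappa)$-disjointness-expressing if for some constant $\alpha>0$, for every positive integer $N$ and every $X\subseteq\{1,\dots,N\}$ one can define graphs $L(X)$ and $R(X)$, each containing a labelled set $S$ of special vertices, such that for all $A,B\subseteq\{1,\dots,N\}$: (i) the graph $g(L(A),R(B))$ obtained by identifying each vertex of $S$ in $L(A)$ with the corresponding vertex of $S$ in $R(B)$ is connected and has at most $\alpha N^{1/\kappa}$ vertices; (ii) the subgraph of $g(L(A),R(B))$ induced by the closed neighborhood $N[S]$ is independent of $A,B$ (for all $A,A',B,B'$ there is an isomorphism between these induced subgraphs that is the identity on $S$) and has at most $s$ vertices; (iii) $g(L(A),R(B))\in\mathcal{C}$ if and only if $A\cap B=\emptyset$. *)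

theory Defs
  imports "HOL-Analysis.Analysis"
begin

type_synonym 'v graph = "'v set \<times> ('v \<times> 'v) set"

definition verts :: "'v graph \<Rightarrow> 'v set" where "verts G = fst G"
definition edges :: "'v graph \<Rightarrow> ('v \<times> 'v) set" where "edges G = snd G"

definition simple_graph :: "'v graph \<Rightarrow> bool" where
  "simple_graph G \<longleftrightarrow> finite (verts G) \<and> edges G \<subseteq> verts G \<times> verts G
     \<and> sym (edges G) \<and> irrefl (edges G)"

definition connected_graph :: "'v graph \<Rightarrow> bool" where
  "connected_graph G \<longleftrightarrow> (\<forall>x\<in>verts G. \<forall>y\<in>verts G. (x, y) \<in> (edges G)\<^sup>*)"

definition unit_distance_graph :: "'v graph \<Rightarrow> bool" where
  "unit_distance_graph G \<longleftrightarrow> simple_graph G \<and>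
     (\<exists>p :: 'v \<Rightarrow> real^2. inj_on p (verts G) \<and>
        (\<forall>x\<in>verts G. \<forall>y\<in>verts G. (x, y) \<in> edges G \<longleftrightarrow> dist (p x) (p y) = 1))"

text \<open>Gluing g(L,R) along the special set S (contained in both vertex sets):
  vertices of L are tagged Inl, vertices of R outside S are tagged Inr, and a
  special vertex s of R is identified with the vertex Inl s of L.\<close>
definition glue_map :: "'v set \<Rightarrow> 'v \<Rightarrow> 'v + 'v" where
  "glue_map S x = (if x \<in> S then Inl x else Inr x)"

definition glue :: "'v graph \<Rightarrow> 'v graph \<Rightarrow> 'v set \<Rightarrow> ('v + 'v) graph" where
  "glue L R S =
     (Inl ` verts L \<union> Inr ` (verts R - S),
      {(Inl x, Inl y) | x y. (x, y) \<in> edges L} \<union>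
      {(glue_map S x, glue_map S y) | x y. (x, y) \<in> edges R})"

definition closed_nbhd :: "'w graph \<Rightarrow> 'w set \<Rightarrow> 'w set" where
  "closed_nbhd G T = T \<union> {v \<in> verts G. \<exists>t\<in>T. (t, v) \<in> edges G}"

definition induced_iso :: "'w graph \<Rightarrow> 'w set \<Rightarrow> 'u graph \<Rightarrow> 'u set \<Rightarrow> ('w \<Rightarrow> 'u) \<Rightarrow> bool" where
  "induced_iso G1 W1 G2 W2 f \<longleftrightarrow> bij_betw f W1 W2 \<and>
     (\<forall>x\<in>W1. \<forall>y\<in>W1. (x, y) \<in> edges G1 \<longleftrightarrow> (f x, f y) \<in> edges G2)"

definition disjointness_expressing ::
  "((nat + nat) graph \<Rightarrow> bool) \<Rightarrow> nat \<Rightarrow> nat \<Rightarrow> bool" where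
  "disjointness_expressing C s \<kappa> \<longleftrightarrow>
    (\<exists>\<alpha>::real. \<alpha> > 0 \<and>
      (\<forall>N::nat. N > 0 \<longrightarrow>
        (\<exists>(S::nat set) (L::nat set \<Rightarrow> nat graph) (R::nat set \<Rightarrow> nat graph).
          (\<forall>X. X \<subseteq> {1..N} \<longrightarrow>
             simple_graph (L X) \<and> simple_graph (R X) \<and>
             S \<subseteq> verts (L X) \<and> S \<subseteq> verts (R X)) \<and>
          (\<forall>A B. A \<subseteq> {1..N} \<longrightarrow> B \<subseteq> {1..N} \<longrightarrow>
             connected_graph (glue (L A) (R B) S) \<and>
             real (card (verts (glue (L A) (R B) S))) \<le> \<alpha> * real N powr (1 / real \<kappa>) \<and>
             card (closed_nbhd (glue (L A) (R B) S) (Inl ` S)) \<le> s \<and>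
             (C (glue (L A) (R B) S) \<longleftrightarrow> A \<inter> B = {})) \<and>
          (\<forall>A A' B B'. A \<subseteq> {1..N} \<longrightarrow> A' \<subseteq> {1..N} \<longrightarrow> B \<subseteq> {1..N} \<longrightarrow> B' \<subseteq> {1..N} \<longrightarrow>
             (\<exists>f. induced_iso (glue (L A) (R B) S)
                              (closed_nbhd (glue (L A) (R B) S) (Inl ` S))
                              (glue (L A') (R B') S)
                              (closed_nbhd (glue (L A') (R B') S) (Inl ` S)) f
                  \<and> (\<forall>x\<in>S. f (Inl x) = Inl x))))))"

end

theory Submission
  imports Defs "HOL-Library.Nat_Bijection"
begin

lemma dist_sq2: "(dist (x::real^2) y = 1) \<longleftrightarrow> (x$1-y$1)^2 + (x$2-y$2)^2 = 1"
proof -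
  have "dist x y = sqrt ((x$1-y$1)^2 + (x$2-y$2)^2)"
    unfolding dist_norm norm_eq_sqrt_inner inner_vec_def sum_2
    by (simp add: power2_eq_square)
  then show ?thesis by (metis real_sqrt_eq_1_iff)
qed


lemma plane_aux:
  fixes x1 x2 w1 w2 y1 y2 :: real
  assumes "x1^2+x2^2 = 1" "w1^2+w2^2=1" "y1^2+y2^2=1"
    "(x1-y1)^2+(x2-y2)^2 = 1" "(w1-y1)^2+(w2-y2)^2 = 1"
    "x1 \<noteq> w1 \<or> x2 \<noteq> w2"
  shows "x1 + w1 = y1 \<and> x2 + w2 = y2"
proof -
  define d1 where "d1 = x1 - w1"
  define d2 where "d2 = x2 - w2"
  define t1 where "t1 = x1 + w1 - y1"
  define t2 where "t2 = x2 + w2 - y2"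
  have e1: "(x1-y1)^2+(x2-y2)^2 = (x1^2+x2^2) + (y1^2+y2^2) - 2*(x1*y1 + x2*y2)"
    by (simp add: power2_diff)
  have e2: "(w1-y1)^2+(w2-y2)^2 = (w1^2+w2^2) + (y1^2+y2^2) - 2*(w1*y1 + w2*y2)"
    by (simp add: power2_diff)
  have xv0: "2*(x1*y1 + x2*y2) = 1" using assms(1,3,4) e1 by linarith
  have wv0: "2*(w1*y1 + w2*y2) = 1" using assms(2,3,5) e2 by linarith
  have xv: "x1*y1 + x2*y2 = 1/2" using xv0 by simp
  have wv: "w1*y1 + w2*y2 = 1/2" using wv0 by simp
  have dv: "d1*y1 + d2*y2 = 0"
  proof -
    have "d1*y1 + d2*y2 = (x1*y1 + x2*y2) - (w1*y1 + w2*y2)" unfolding d1_def d2_def by algebra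
    then show ?thesis using xv wv by simp
  qed
  have tv: "t1*y1 + t2*y2 = 0"
  proof -
    have "t1*y1 + t2*y2 = (x1*y1 + x2*y2) + (w1*y1 + w2*y2) - (y1^2+y2^2)" unfolding t1_def t2_def power2_eq_square by algebra
    then show ?thesis using xv wv assms(3) by simp
  qed
  have dt: "d1*t1 + d2*t2 = 0"
  proof -
    have "d1*t1 + d2*t2 = (x1^2+x2^2) - (w1^2+w2^2) - (d1*y1+d2*y2)"
      unfolding d1_def d2_def t1_def t2_def power2_eq_square by algebra
    then show ?thesis using assms(1,2) dv by simp
  qed
  have c1: "y1*(d1*t2 - d2*t1) = 0"
  proof -
    have "y1*(d1*t2 - d2*t1) = t2*(d1*y1+d2*y2) - d2*(t1*y1+t2*y2)" by algebra
    then show ?thesis using dv tv by simp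
  qed
  have c2: "y2*(d1*t2 - d2*t1) = 0"
  proof -
    have "y2*(d1*t2 - d2*t1) = d1*(t1*y1+t2*y2) - t1*(d1*y1+d2*y2)" by algebra
    then show ?thesis using dv tv by simp
  qed
  have vnz: "y1 \<noteq> 0 \<or> y2 \<noteq> 0" using assms(3) by auto
  have cr: "d1*t2 - d2*t1 = 0" using c1 c2 vnz by auto
  have lag: "(d1^2+d2^2)*(t1^2+t2^2) = (d1*t1+d2*t2)^2 + (d1*t2-d2*t1)^2"
    unfolding power2_eq_square by algebra
  have "(d1^2+d2^2)*(t1^2+t2^2) = 0" using lag dt cr by simp
  moreover have "d1^2+d2^2 \<noteq> 0" using assms(6) unfolding d1_def d2_def
    by (simp add: sum_power2_eq_zero_iff)
  ultimately have "t1^2+t2^2 = 0" by (metis mult_eq_0_iff)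
  then have "t1 = 0" "t2 = 0" by (simp_all add: sum_power2_eq_zero_iff)
  then show ?thesis unfolding t1_def t2_def by simp
qed

lemma force_geo:
  fixes x u v w :: "real^2"
  assumes "dist x u = 1" "dist x v = 1" "dist w u = 1" "dist w v = 1" "dist v u = 1" "x \<noteq> w"
  shows "x = u + v - w"
proof -
  have ne: "x$1-u$1 \<noteq> w$1-u$1 \<or> x$2-u$2 \<noteq> w$2-u$2"
  proof (rule ccontr)
    assume "\<not> ?thesis"
    then have "x$1 = w$1" "x$2 = w$2" by auto
    then have "x = w" by (simp add: vec_eq_iff forall_2)
    with assms(6) show False by simp
  qed
  have h1: "(x$1-u$1)^2 + (x$2-u$2)^2 = 1" using assms(1) unfolding dist_sq2 .
  have h2: "(w$1-u$1)^2 + (w$2-u$2)^2 = 1" using assms(3) unfolding dist_sq2 .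
  have h3: "(v$1-u$1)^2 + (v$2-u$2)^2 = 1" using assms(5) unfolding dist_sq2 .
  have h4: "((x$1-u$1)-(v$1-u$1))^2 + ((x$2-u$2)-(v$2-u$2))^2 = 1" using assms(2) unfolding dist_sq2 by simp
  have h5: "((w$1-u$1)-(v$1-u$1))^2 + ((w$2-u$2)-(v$2-u$2))^2 = 1" using assms(4) unfolding dist_sq2 by simp
  have a: "(x$1-u$1) + (w$1-u$1) = v$1-u$1 \<and> (x$2-u$2) + (w$2-u$2) = v$2-u$2"
    by (rule plane_aux[OF h1 h2 h3 h4 h5 ne])
  have "x$1 = u$1 + v$1 - w$1" "x$2 = u$2 + v$2 - w$2" using a by linarith+
  then show ?thesis by (simp add: vec_eq_iff forall_2)
qed
section \<open>Lattice combinatorics\<close>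

definition enc :: "int \<times> int \<Rightarrow> nat" where
  "enc z = prod_encode (int_encode (fst z), int_encode (snd z))"
definition dec :: "nat \<Rightarrow> int \<times> int" where
  "dec n = (int_decode (fst (prod_decode n)), int_decode (snd (prod_decode n)))"

lemma dec_enc[simp]: "dec (enc z) = z"
  by (simp add: enc_def dec_def)
lemma enc_dec[simp]: "enc (dec n) = n"
  by (simp add: enc_def dec_def)
lemma enc_eq[simp]: "enc z = enc w \<longleftrightarrow> z = w"
  by (metis dec_enc)
lemma mem_enc_image: "n \<in> enc ` P \<longleftrightarrow> dec n \<in> P"
  by (metis dec_enc enc_dec image_iff)

definition adjd :: "int \<Rightarrow> int \<Rightarrow> bool" where
  "adjd a b \<longleftrightarrow> (a = 1 \<and> b = 0) \<or> (a = -1 \<and> b = 0) \<or> (a = 0 \<and> b = 1) \<or> (a = 0 \<and> b = -1)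
      \<or> (a = 1 \<and> b = -1) \<or> (a = -1 \<and> b = 1)"

definition adj :: "int \<times> int \<Rightarrow> int \<times> int \<Rightarrow> bool" where
  "adj z w \<longleftrightarrow> adjd (fst w - fst z) (snd w - snd z)"

lemma adj_simp: "adj (a,b) (c,d) \<longleftrightarrow> adjd (c - a) (d - b)"
  by (simp add: adj_def)

lemma adj_sym: "adj z w \<Longrightarrow> adj w z"
  unfolding adj_def adjd_def by presburger

lemma adj_irrefl: "\<not> adj z z"
  unfolding adj_def adjd_def by simp

definition PL :: "nat \<Rightarrow> nat set \<Rightarrow> (int \<times> int) set" where
  "PL N A = {(x,y). (0 \<le> x \<and> x \<le> 1 \<and> 0 \<le> y \<and> y \<le> 3) \<or> (0 \<le> x \<and> x \<le> 4 * int N + 2 \<and> 2 \<le> y \<and> y \<le> 3)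
     \<or> (\<exists>i\<in>A. 1 \<le> i \<and> i \<le> N \<and> ((x = 4 * int i \<and> y = 1) \<or> (x = 4 * int i + 1 \<and> (y = 1 \<or> y = 0))))}"

definition sig :: "int \<times> int \<Rightarrow> int \<times> int" where
  "sig z = (fst z + snd z, - snd z)"

lemma sig_sig[simp]: "sig (sig z) = z"
  by (simp add: sig_def)

lemma sig_inj[simp]: "sig z = sig w \<longleftrightarrow> z = w"
  by (metis sig_sig)

lemma adj_sig: "adj (sig z) (sig w) \<longleftrightarrow> adj z w"
  unfolding adj_def adjd_def sig_def fst_conv snd_conv by presburger

definition PR :: "nat \<Rightarrow> nat set \<Rightarrow> (int \<times> int) set" where
  "PR N B = {z. sig z \<in> PL N B}"

definition S0 :: "(int \<times> int) set" where "S0 = {(0,0),(1,0)}"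

lemma S0_PL: "S0 \<subseteq> PL N A" by (auto simp: S0_def PL_def)
lemma S0_PR: "S0 \<subseteq> PR N A" by (auto simp: S0_def PR_def PL_def sig_def)

definition Lg :: "nat \<Rightarrow> nat set \<Rightarrow> nat graph" where
  "Lg N X = (enc ` PL N X, {(enc z, enc w) | z w. z \<in> PL N X \<and> w \<in> PL N X \<and> adj z w})"
definition Rg :: "nat \<Rightarrow> nat set \<Rightarrow> nat graph" where
  "Rg N X = (enc ` PR N X, {(enc z, enc w) | z w. z \<in> PR N X \<and> w \<in> PR N X \<and> adj z w})"
definition SS :: "nat set" where "SS = enc ` S0"

lemma finite_PL: "finite (PL N A)"
proof -
  have "PL N A \<subseteq> {0..4 * int N + 2} \<times> {0..3}" by (auto simp: PL_def)
  then show ?thesis by (rule finite_subset) simp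
qed

lemma card_PL: "card (PL N A) \<le> 16 * N + 12"
proof -
  have "PL N A \<subseteq> {0..4 * int N + 2} \<times> {0..3}" by (auto simp: PL_def)
  then have "card (PL N A) \<le> card ({0..4 * int N + 2} \<times> {0..(3::int)})"
    by (rule card_mono[rotated]) simp
  also have "\<dots> = 16 * N + 12" by (simp add: card_cartesian_product nat_add_distrib nat_mult_distrib)
  finally show ?thesis .
qed

lemma PR_image: "PR N B = sig ` PL N B"
proof (intro set_eqI iffI)
  fix z assume "z \<in> PR N B"
  then have "sig z \<in> PL N B" by (simp add: PR_def)
  then show "z \<in> sig ` PL N B" by (metis image_eqI sig_sig)
next
  fix z assume "z \<in> sig ` PL N B"
  then obtain w where "w \<in> PL N B" "z = sig w" by blast
  then show "z \<in> PR N B" by (simp add: PR_def)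
qed

lemma finite_PR: "finite (PR N B)"
  using finite_PL PR_image by simp

lemma card_PR: "card (PR N B) \<le> 16 * N + 12"
  using card_PL[of N B] card_image_le[OF finite_PL, of sig N B] PR_image by simp

lemma mem_enc_pairs: "(a, b) \<in> {(enc z, enc w) | z w. Q z w} \<longleftrightarrow> Q (dec a) (dec b)"
proof
  assume "(a, b) \<in> {(enc z, enc w) | z w. Q z w}"
  then obtain z w where "a = enc z" "b = enc w" "Q z w" by blast
  then show "Q (dec a) (dec b)" by simp
next
  assume "Q (dec a) (dec b)"
  moreover have "(a, b) = (enc (dec a), enc (dec b))" by simp
  ultimately show "(a, b) \<in> {(enc z, enc w) | z w. Q z w}" by blast
qed

lemma verts_Lg: "verts (Lg N X) = enc ` PL N X" by (simp add: Lg_def verts_def)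
lemma verts_Rg: "verts (Rg N X) = enc ` PR N X" by (simp add: Rg_def verts_def)
lemma edges_Lg: "(a, b) \<in> edges (Lg N X) \<longleftrightarrow> dec a \<in> PL N X \<and> dec b \<in> PL N X \<and> adj (dec a) (dec b)"
proof -
  have "edges (Lg N X) = {(enc z, enc w) | z w. z \<in> PL N X \<and> w \<in> PL N X \<and> adj z w}"
    by (simp add: Lg_def edges_def)
  then show ?thesis using mem_enc_pairs[of a b "\<lambda>z w. z \<in> PL N X \<and> w \<in> PL N X \<and> adj z w"] by simp
qed
lemma edges_Rg: "(a, b) \<in> edges (Rg N X) \<longleftrightarrow> dec a \<in> PR N X \<and> dec b \<in> PR N X \<and> adj (dec a) (dec b)"
proof -
  have "edges (Rg N X) = {(enc z, enc w) | z w. z \<in> PR N X \<and> w \<in> PR N X \<and> adj z w}"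
    by (simp add: Rg_def edges_def)
  then show ?thesis using mem_enc_pairs[of a b "\<lambda>z w. z \<in> PR N X \<and> w \<in> PR N X \<and> adj z w"] by simp
qed

lemma simple_Lg: "simple_graph (Lg N X)"
  unfolding simple_graph_def
  by (auto simp: verts_Lg edges_Lg finite_PL mem_enc_image sym_def irrefl_def adj_irrefl intro: adj_sym)

lemma simple_Rg: "simple_graph (Rg N X)"
  unfolding simple_graph_def
  by (auto simp: verts_Rg edges_Rg finite_PR mem_enc_image sym_def irrefl_def adj_irrefl intro: adj_sym)

lemma SS_sub_L: "SS \<subseteq> verts (Lg N X)"
  using S0_PL by (auto simp: SS_def verts_Lg)
lemma SS_sub_R: "SS \<subseteq> verts (Rg N X)"
  using S0_PR by (auto simp: SS_def verts_Rg)

lemma mem_SS: "n \<in> SS \<longleftrightarrow> dec n \<in> S0"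
  by (simp add: SS_def mem_enc_image)

definition co :: "nat + nat \<Rightarrow> int \<times> int" where
  "co x = (case x of Inl n \<Rightarrow> dec n | Inr n \<Rightarrow> dec n)"

definition okp :: "nat + nat \<Rightarrow> nat + nat \<Rightarrow> bool" where
  "okp x y = (case (x, y) of (Inl a, Inr b) \<Rightarrow> dec a \<in> S0 | (Inr b, Inl a) \<Rightarrow> dec a \<in> S0 | _ \<Rightarrow> True)"

lemma verts_glue: "verts (glue L R S) = Inl ` verts L \<union> Inr ` (verts R - S)"
  by (simp add: glue_def verts_def)
lemma edges_glue: "edges (glue L R S) = {(Inl x, Inl y) | x y. (x, y) \<in> edges L} \<union>
      {(glue_map S x, glue_map S y) | x y. (x, y) \<in> edges R}"
  by (simp add: glue_def edges_def)

abbreviation G :: "nat \<Rightarrow> nat set \<Rightarrow> nat set \<Rightarrow> (nat + nat) graph" where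
  "G N A B \<equiv> glue (Lg N A) (Rg N B) SS"

lemma verts_G_Inl: "Inl n \<in> verts (G N A B) \<longleftrightarrow> dec n \<in> PL N A"
  by (auto simp: verts_glue verts_Lg mem_enc_image)

lemma verts_G_Inr: "Inr n \<in> verts (G N A B) \<longleftrightarrow> dec n \<in> PR N B \<and> dec n \<notin> S0"
  by (auto simp: verts_glue verts_Rg mem_enc_image mem_SS)

lemma gm_Inl: "glue_map SS a = Inl b \<longleftrightarrow> a = b \<and> dec a \<in> S0"
  by (auto simp: glue_map_def mem_SS)
lemma gm_Inr: "glue_map SS a = Inr b \<longleftrightarrow> a = b \<and> dec a \<notin> S0"
  by (auto simp: glue_map_def mem_SS)

lemma gm_Inl': "Inl b = glue_map SS a \<longleftrightarrow> a = b \<and> dec a \<in> S0"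
  by (auto simp: glue_map_def mem_SS)
lemma gm_Inr': "Inr b = glue_map SS a \<longleftrightarrow> a = b \<and> dec a \<notin> S0"
  by (auto simp: glue_map_def mem_SS)

lemma edges_G_raw: "edges (G N A B) = {(Inl x, Inl y) | x y. (x, y) \<in> edges (Lg N A)} \<union>
      {(glue_map SS x, glue_map SS y) | x y. (x, y) \<in> edges (Rg N B)}"
  by (rule edges_glue)

lemma edges_G_LL: "(Inl a, Inl b) \<in> edges (G N A B) \<longleftrightarrow> dec a \<in> PL N A \<and> dec b \<in> PL N A \<and> adj (dec a) (dec b)"
  unfolding edges_G_raw using S0_PL[of N A]
  by (auto simp: gm_Inl gm_Inl' edges_Lg edges_Rg)

lemma edges_G_LR: "(Inl a, Inr b) \<in> edges (G N A B) \<longleftrightarrow> dec a \<in> S0 \<and> dec b \<in> PR N B \<and> dec b \<notin> S0 \<and> adj (dec a) (dec b)"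
  unfolding edges_G_raw using S0_PR[of N B]
  by (auto simp: gm_Inl gm_Inr gm_Inl' gm_Inr' edges_Lg edges_Rg)

lemma edges_G_RL: "(Inr b, Inl a) \<in> edges (G N A B) \<longleftrightarrow> dec a \<in> S0 \<and> dec b \<in> PR N B \<and> dec b \<notin> S0 \<and> adj (dec b) (dec a)"
  unfolding edges_G_raw using S0_PR[of N B]
  by (auto simp: gm_Inl gm_Inr gm_Inl' gm_Inr' edges_Lg edges_Rg)

lemma edges_G_RR: "(Inr a, Inr b) \<in> edges (G N A B) \<longleftrightarrow> dec a \<in> PR N B \<and> dec a \<notin> S0 \<and> dec b \<in> PR N B \<and> dec b \<notin> S0 \<and> adj (dec a) (dec b)"
  unfolding edges_G_raw
  by (auto simp: gm_Inl gm_Inr gm_Inl' gm_Inr' edges_Lg edges_Rg)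

lemma edges_G: "(x, y) \<in> edges (G N A B) \<longleftrightarrow>
    x \<in> verts (G N A B) \<and> y \<in> verts (G N A B) \<and> adj (co x) (co y) \<and> okp x y"
  using S0_PL[of N A] S0_PR[of N B]
  by (cases x; cases y) (auto simp: edges_G_LL edges_G_LR edges_G_RL edges_G_RR verts_G_Inl verts_G_Inr co_def okp_def)


section \<open>Geometry of the triangular lattice\<close>

definition emb :: "int \<times> int \<Rightarrow> real^2" where
  "emb z = vector [real_of_int (fst z) + real_of_int (snd z) / 2, real_of_int (snd z) * sqrt 3 / 2]"

lemma emb_sq: "(emb z$1 - emb w$1)^2 + (emb z$2 - emb w$2)^2 =
   real_of_int ((fst w - fst z)^2 + (fst w - fst z) * (snd w - snd z) + (snd w - snd z)^2)"
proof -
  define a where "a = real_of_int (fst z)"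
  define b where "b = real_of_int (snd z)"
  define c where "c = real_of_int (fst w)"
  define d where "d = real_of_int (snd w)"
  define r where "r = sqrt (3::real)"
  have r: "r * r = 3" unfolding r_def by simp
  have l: "(emb z$1 - emb w$1)^2 + (emb z$2 - emb w$2)^2 = (a + b/2 - (c + d/2))^2 + (b*r/2 - d*r/2)^2"
    unfolding emb_def a_def b_def c_def d_def r_def by simp
  have rr: "real_of_int ((fst w - fst z)^2 + (fst w - fst z) * (snd w - snd z) + (snd w - snd z)^2)
      = (c - a)^2 + (c - a)*(d - b) + (d - b)^2"
    unfolding a_def b_def c_def d_def by simp
  have "(a + b/2 - (c + d/2))^2 + (b*r/2 - d*r/2)^2 = (c - a)^2 + (c - a)*(d - b) + (d - b)^2"
  proof -
    have "(a + b/2 - (c + d/2))^2 + (b*r/2 - d*r/2)^2 = (c - a)^2 + (c - a)*(d - b) + (d - b)^2/4 + (d-b)^2 * (r*r) / 4"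
      unfolding power2_eq_square by (simp add: field_simps)
    also have "\<dots> = (c - a)^2 + (c - a)*(d - b) + (d - b)^2" using r by simp
    finally show ?thesis .
  qed
  then show ?thesis using l rr by simp
qed

lemma int_form_one: "(a::int)^2 + a*b + b^2 = 1 \<longleftrightarrow> adjd a b"
proof
  assume h: "a^2 + a*b + b^2 = 1"
  have e1: "(2*a+b)^2 + 3*b^2 = 4*(a^2 + a*b + b^2)" by algebra
  have e2: "(a+2*b)^2 + 3*a^2 = 4*(a^2 + a*b + b^2)" by algebra
  have "b^2 \<le> 1" using e1 h by (smt (verit) zero_le_power2)
  then have "\<bar>b\<bar> \<le> 1" by (simp add: abs_square_le_1)
  then have hb: "b = -1 \<or> b = 0 \<or> b = 1" by linarith
  have "a^2 \<le> 1" using e2 h by (smt (verit) zero_le_power2)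
  then have "\<bar>a\<bar> \<le> 1" by (simp add: abs_square_le_1)
  then have ha: "a = -1 \<or> a = 0 \<or> a = 1" by linarith
  show "adjd a b" using ha hb h unfolding adjd_def by auto
next
  assume "adjd a b"
  then show "a^2 + a*b + b^2 = 1" unfolding adjd_def by auto
qed

lemma int_form_zero: "(a::int)^2 + a*b + b^2 = 0 \<Longrightarrow> a = 0 \<and> b = 0"
proof -
  assume h: "a^2 + a*b + b^2 = 0"
  have e1: "(2*a+b)^2 + 3*b^2 = 4*(a^2 + a*b + b^2)" by algebra
  have "b^2 \<le> 0" using e1 h by (smt (verit) zero_le_power2)
  then have "b = 0" by simp
  then show ?thesis using h by simp
qed

lemma emb_dist: "dist (emb z) (emb w) = 1 \<longleftrightarrow> adj z w"
proof -
  have "dist (emb z) (emb w) = 1 \<longleftrightarrow>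
     (fst w - fst z)^2 + (fst w - fst z) * (snd w - snd z) + (snd w - snd z)^2 = 1"
    unfolding dist_sq2 emb_sq by linarith
  also have "\<dots> \<longleftrightarrow> adj z w" unfolding adj_def int_form_one ..
  finally show ?thesis .
qed

lemma emb_inj: "emb z = emb w \<Longrightarrow> z = w"
proof -
  assume "emb z = emb w"
  then have "(emb z$1 - emb w$1)^2 + (emb z$2 - emb w$2)^2 = 0" by simp
  then have "(fst w - fst z)^2 + (fst w - fst z) * (snd w - snd z) + (snd w - snd z)^2 = 0"
    unfolding emb_sq by linarith
  then have "fst w - fst z = 0 \<and> snd w - snd z = 0" by (rule int_form_zero)
  then show "z = w" by (simp add: prod_eq_iff)
qed

lemma PL_row:
  assumes "z \<in> PL N A" "z \<notin> S0"
  shows "0 \<le> snd z \<and> snd z \<le> 3 \<and>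
    (snd z = 0 \<longrightarrow> (\<exists>i\<in>A. 1 \<le> i \<and> i \<le> N \<and> fst z = 4 * int i + 1)) \<and>
    (snd z = 1 \<longrightarrow> fst z = 0 \<or> fst z = 1 \<or> (\<exists>i\<in>A. 1 \<le> i \<and> i \<le> N \<and> (fst z = 4 * int i \<or> fst z = 4 * int i + 1)))"
proof -
  obtain x y where z: "z = (x, y)" by force
  have "x = 0 \<and> y = 0 \<longrightarrow> False" "x = 1 \<and> y = 0 \<longrightarrow> False" using assms(2) z by (auto simp: S0_def)
  then show ?thesis using assms(1) z unfolding PL_def by auto
qed

lemma PR_row:
  assumes "w \<in> PR N B" "w \<notin> S0"
  shows "-3 \<le> snd w \<and> snd w \<le> 0 \<and>
    (snd w = 0 \<longrightarrow> (\<exists>j\<in>B. 1 \<le> j \<and> j \<le> N \<and> fst w = 4 * int j + 1)) \<and>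
    (snd w = -1 \<longrightarrow> fst w = 1 \<or> fst w = 2 \<or> (\<exists>j\<in>B. 1 \<le> j \<and> j \<le> N \<and> (fst w = 4 * int j + 1 \<or> fst w = 4 * int j + 2)))"
proof -
  obtain x y where w: "w = (x, y)" by force
  have "x = 0 \<and> y = 0 \<longrightarrow> False" "x = 1 \<and> y = 0 \<longrightarrow> False" using assms(2) w by (auto simp: S0_def)
  then show ?thesis using assms(1) w unfolding PR_def PL_def sig_def by auto
qed

lemma sep:
  assumes AB: "A \<inter> B = {}" and z: "z \<in> PL N A" "z \<notin> S0" and w: "w \<in> PR N B" "w \<notin> S0"
  shows "z \<noteq> w \<and> \<not> adj z w"
proof -
  obtain x y where zz: "z = (x, y)" by force
  obtain x' y' where ww: "w = (x', y')" by force
  note L = PL_row[OF z, unfolded zz fst_conv snd_conv]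
  note R = PR_row[OF w, unfolded ww fst_conv snd_conv]
  have goal: "(x, y) \<noteq> (x', y') \<and> \<not> adjd (x' - x) (y' - y)"
  proof (cases "y = 0 \<and> y' = 0")
    case True
    then obtain i j where "i \<in> A" "j \<in> B" "x = 4 * int i + 1" "x' = 4 * int j + 1" using L R by auto
    moreover have "i \<noteq> j" using AB \<open>i \<in> A\<close> \<open>j \<in> B\<close> by auto
    ultimately show ?thesis using True unfolding adjd_def by auto
  next
    case F1: False
    show ?thesis
    proof (cases "y = 1 \<and> y' = 0")
      case True
      then obtain j where j: "j \<in> B" "1 \<le> j" "x' = 4 * int j + 1" using R by auto
      have "x = 0 \<or> x = 1 \<or> (\<exists>i\<in>A. 1 \<le> i \<and> i \<le> N \<and> (x = 4 * int i \<or> x = 4 * int i + 1))" using L True by auto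
      show ?thesis
      proof (cases "x = 0 \<or> x = 1")
        case True2: True
        then show ?thesis using True j unfolding adjd_def by (auto; presburger)
      next
        case False
        then obtain i where "i \<in> A" "x = 4 * int i \<or> x = 4 * int i + 1" using \<open>x = 0 \<or> _\<close> by auto
        moreover have "i \<noteq> j" using AB \<open>i \<in> A\<close> j by auto
        ultimately show ?thesis using True j unfolding adjd_def by auto
      qed
    next
      case F2: False
      show ?thesis
      proof (cases "y = 0 \<and> y' = -1")
        case True
        then obtain i where i: "i \<in> A" "1 \<le> i" "x = 4 * int i + 1" using L by auto
        have "x' = 1 \<or> x' = 2 \<or> (\<exists>j\<in>B. 1 \<le> j \<and> j \<le> N \<and> (x' = 4 * int j + 1 \<or> x' = 4 * int j + 2))" using R True by auto
        show ?thesis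
        proof (cases "x' = 1 \<or> x' = 2")
          case True2: True
          then show ?thesis using True i unfolding adjd_def by (auto; presburger)
        next
          case False
          then obtain j where "j \<in> B" "x' = 4 * int j + 1 \<or> x' = 4 * int j + 2" using \<open>x' = 1 \<or> _\<close> by auto
          moreover have "i \<noteq> j" using AB \<open>j \<in> B\<close> i by auto
          ultimately show ?thesis using True i unfolding adjd_def by auto
        qed
      next
        case False
        have b: "0 \<le> y" "y' \<le> 0" using L R by auto
        have "y - y' \<ge> 2" using F1 F2 False b by presburger
        then show ?thesis unfolding adjd_def by auto
      qed
    qed
  qed
  then show ?thesis unfolding zz ww adj_def by simp
qed

lemma nbL:
  assumes "z \<in> PL N A" "s \<in> S0" "adj s z"
  shows "z \<in> {(0,0),(1,0),(0,1),(1,1)}"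
proof (cases "z \<in> S0")
  case True then show ?thesis by (auto simp: S0_def)
next
  case False
  obtain x y where zz: "z = (x, y)" by force
  note L = PL_row[OF assms(1) False, unfolded zz fst_conv snd_conv]
  have s: "s = (0,0) \<or> s = (1,0)" using assms(2) by (simp add: S0_def)
  have a: "adjd (x - fst s) y" using assms(3) s zz by (auto simp: adj_def)
  show ?thesis
  proof (cases "y = 0")
    case True
    then obtain i where "1 \<le> i" "x = 4 * int i + 1" using L by auto
    then show ?thesis using a s True unfolding adjd_def by auto
  next
    case F: False
    then have y1: "y = 1" using a L unfolding adjd_def by auto
    then have "x = 0 \<or> x = 1 \<or> (\<exists>i\<in>A. 1 \<le> i \<and> i \<le> N \<and> (x = 4 * int i \<or> x = 4 * int i + 1))" using L by auto
    show ?thesis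
    proof (cases "x = 0 \<or> x = 1")
      case True
      then show ?thesis using zz y1 by auto
    next
      case False
      then obtain i where "1 \<le> i" "x = 4 * int i \<or> x = 4 * int i + 1" using \<open>x = 0 \<or> _\<close> by auto
      then show ?thesis using a s y1 unfolding adjd_def by auto
    qed
  qed
qed

lemma nbR:
  assumes "z \<in> PR N B" "z \<notin> S0" "s \<in> S0" "adj s z"
  shows "z \<in> {(1,-1),(2,-1)}"
proof -
  obtain x y where zz: "z = (x, y)" by force
  note R = PR_row[OF assms(1,2), unfolded zz fst_conv snd_conv]
  have s: "s = (0,0) \<or> s = (1,0)" using assms(3) by (simp add: S0_def)
  have a: "adjd (x - fst s) y" using assms(4) s zz by (auto simp: adj_def)
  show ?thesis
  proof (cases "y = 0")
    case True
    then obtain j where "1 \<le> j" "x = 4 * int j + 1" using R by auto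
    then show ?thesis using a s True unfolding adjd_def by auto
  next
    case F: False
    then have y1: "y = -1" using a R unfolding adjd_def by auto
    then have "x = 1 \<or> x = 2 \<or> (\<exists>j\<in>B. 1 \<le> j \<and> j \<le> N \<and> (x = 4 * int j + 1 \<or> x = 4 * int j + 2))" using R by auto
    show ?thesis
    proof (cases "x = 1 \<or> x = 2")
      case True
      then show ?thesis using zz y1 by auto
    next
      case False
      then obtain j where "1 \<le> j" "x = 4 * int j + 1 \<or> x = 4 * int j + 2" using \<open>x = 1 \<or> _\<close> by auto
      then show ?thesis using a s y1 unfolding adjd_def by auto
    qed
  qed
qed


section \<open>Rigidity\<close>

definition phi :: "(int \<times> int \<Rightarrow> real^2) \<Rightarrow> int \<times> int \<Rightarrow> real^2" where
  "phi q z = q (0,0) + real_of_int (fst z) *\<^sub>R (q (1,0) - q (0,0)) + real_of_int (snd z) *\<^sub>R (q (0,1) - q (0,0))"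

lemma phi_lin: "phi q (fst u + fst v - fst w, snd u + snd v - snd w) = phi q u + phi q v - phi q w"
  unfolding phi_def by (simp add: algebra_simps)

lemma force_step:
  assumes inj: "inj_on q P"
    and D: "\<And>a b. a \<in> P \<Longrightarrow> b \<in> P \<Longrightarrow> adj a b \<Longrightarrow> dist (q a) (q b) = 1"
    and mem: "u \<in> P" "v \<in> P" "w \<in> P" "x \<in> P"
    and adjs: "adj x u" "adj x v" "adj w u" "adj w v" "adj v u"
    and xw: "x \<noteq> w"
    and xe: "x = (fst u + fst v - fst w, snd u + snd v - snd w)"
    and qu: "q u = phi q u" and qv: "q v = phi q v" and qw: "q w = phi q w"
  shows "q x = phi q x"
proof -
  have ne: "q x \<noteq> q w" using inj mem xw by (meson inj_on_eq_iff)
  have "q x = q u + q v - q w"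
    by (rule force_geo[OF D[OF mem(4,1) adjs(1)] D[OF mem(4,2) adjs(2)] D[OF mem(3,1) adjs(3)]
          D[OF mem(3,2) adjs(4)] D[OF mem(2,1) adjs(5)] ne])
  also have "\<dots> = phi q x" using qu qv qw xe phi_lin by simp
  finally show ?thesis .
qed

lemma rigid:
  assumes inj: "inj_on q (PL N A)"
    and D: "\<And>a b. a \<in> PL N A \<Longrightarrow> b \<in> PL N A \<Longrightarrow> adj a b \<Longrightarrow> dist (q a) (q b) = 1"
    and i: "i \<in> A" "1 \<le> i" "i \<le> N"
  shows "q (4 * int i + 1, 0) = phi q (4 * int i + 1, 0)"
proof -
  let ?P = "PL N A"
  let ?M = "4 * int N + 2"
  note F = force_step[OF inj D]
  have mV: "(x, y) \<in> ?P" if "0 \<le> x" "x \<le> 1" "0 \<le> y" "y \<le> 3" for x y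
    using that by (simp add: PL_def)
  have mH: "(x, y) \<in> ?P" if "0 \<le> x" "x \<le> ?M" "2 \<le> y" "y \<le> 3" for x y
    using that by (simp add: PL_def)
  have b0: "q (0,0) = phi q (0,0)" "q (1,0) = phi q (1,0)" "q (0,1) = phi q (0,1)"
    by (simp_all add: phi_def)
  have s1: "q (1,1) = phi q (1,1)"
    by (rule F[of "(1,0)" "(0,1)" "(0,0)"]) (auto intro: mV simp: adj_def adjd_def b0)
  have s2: "q (0,2) = phi q (0,2)"
    by (rule F[of "(0,1)" "(1,1)" "(1,0)"]) (auto intro: mV simp: adj_def adjd_def b0 s1)
  have s3: "q (1,2) = phi q (1,2)"
    by (rule F[of "(1,1)" "(0,2)" "(0,1)"]) (auto intro: mV simp: adj_def adjd_def b0 s1 s2)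
  have s4: "q (0,3) = phi q (0,3)"
    by (rule F[of "(0,2)" "(1,2)" "(1,1)"]) (auto intro: mV simp: adj_def adjd_def b0 s1 s2 s3)
  have s5: "q (1,3) = phi q (1,3)"
    by (rule F[of "(1,2)" "(0,3)" "(0,2)"]) (auto intro: mV simp: adj_def adjd_def b0 s1 s2 s3 s4)
  have row: "\<forall>n::nat. int n + 1 \<le> ?M \<longrightarrow> q (int n, 2) = phi q (int n, 2) \<and> q (int n, 3) = phi q (int n, 3)
      \<and> q (int n + 1, 2) = phi q (int n + 1, 2) \<and> q (int n + 1, 3) = phi q (int n + 1, 3)"
  proof
    fix n :: nat
    show "int n + 1 \<le> ?M \<longrightarrow> q (int n, 2) = phi q (int n, 2) \<and> q (int n, 3) = phi q (int n, 3)
      \<and> q (int n + 1, 2) = phi q (int n + 1, 2) \<and> q (int n + 1, 3) = phi q (int n + 1, 3)"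
    proof (induction n)
      case 0
      show ?case using s2 s3 s4 s5 by simp
    next
      case (Suc n)
      show ?case
      proof
        assume h: "int (Suc n) + 1 \<le> ?M"
        then have IH: "q (int n, 2) = phi q (int n, 2) \<and> q (int n, 3) = phi q (int n, 3)
          \<and> q (int n + 1, 2) = phi q (int n + 1, 2) \<and> q (int n + 1, 3) = phi q (int n + 1, 3)"
          using Suc.IH by simp
        have a: "q (int n + 2, 2) = phi q (int n + 2, 2)"
          by (rule F[of "(int n + 1, 2)" "(int n + 1, 3)" "(int n, 3)"])
             (use IH h in \<open>auto intro!: mH simp: adj_def adjd_def\<close>)
        have b: "q (int n + 2, 3) = phi q (int n + 2, 3)"
          by (rule F[of "(int n + 1, 3)" "(int n + 2, 2)" "(int n + 1, 2)"])
             (use IH h a in \<open>auto intro!: mH simp: adj_def adjd_def\<close>)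
        show "q (int (Suc n), 2) = phi q (int (Suc n), 2) \<and> q (int (Suc n), 3) = phi q (int (Suc n), 3)
          \<and> q (int (Suc n) + 1, 2) = phi q (int (Suc n) + 1, 2) \<and> q (int (Suc n) + 1, 3) = phi q (int (Suc n) + 1, 3)"
          using IH a b by (simp add: add.commute)
      qed
    qed
  qed
  have H: "q (x, 2) = phi q (x, 2) \<and> q (x, 3) = phi q (x, 3)" if "0 \<le> x" "x \<le> ?M" for x
  proof (cases "x = 0")
    case True then show ?thesis using s2 s4 by simp
  next
    case False
    then have "int (nat (x - 1)) + 1 \<le> ?M" using that by simp
    then show ?thesis using row[rule_format, of "nat (x - 1)"] that False by simp
  qed
  define k where "k = 4 * int i"
  have k: "4 \<le> k" "k + 1 \<le> ?M" using i unfolding k_def by simp_all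
  have mT: "(k, 1) \<in> ?P" "(k + 1, 1) \<in> ?P" "(k + 1, 0) \<in> ?P"
    using i unfolding k_def PL_def by auto
  have hk: "q (k, 2) = phi q (k, 2)" "q (k, 3) = phi q (k, 3)" "q (k - 1, 2) = phi q (k - 1, 2)"
     "q (k - 1, 3) = phi q (k - 1, 3)" "q (k + 1, 2) = phi q (k + 1, 2)"
    using H[of k] H[of "k - 1"] H[of "k + 1"] k by simp_all
  have t1: "q (k, 1) = phi q (k, 1)"
    by (rule F[of "(k, 2)" "(k - 1, 2)" "(k - 1, 3)"]) (use k hk mT in \<open>auto intro!: mH simp: adj_def adjd_def\<close>)
  have t2: "q (k + 1, 1) = phi q (k + 1, 1)"
    by (rule F[of "(k, 2)" "(k + 1, 2)" "(k, 3)"]) (use k hk mT in \<open>auto intro!: mH simp: adj_def adjd_def\<close>)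
  have t3: "q (k + 1, 0) = phi q (k + 1, 0)"
    by (rule F[of "(k + 1, 1)" "(k, 1)" "(k, 2)"]) (use k hk mT t1 t2 in \<open>auto intro!: mH simp: adj_def adjd_def\<close>)
  then show ?thesis unfolding k_def .
qed


section \<open>Connectivity\<close>

lemma reach_PL:
  assumes E: "\<And>z w. z \<in> PL N A \<Longrightarrow> w \<in> PL N A \<Longrightarrow> adj z w \<Longrightarrow> (f z, f w) \<in> E"
    and z: "z \<in> PL N A"
  shows "(f z, f (0,0)) \<in> E\<^sup>*"
proof -
  let ?P = "PL N A"
  let ?M = "4 * int N + 2"
  have mV: "(x, y) \<in> ?P" if "0 \<le> x" "x \<le> 1" "0 \<le> y" "y \<le> 3" for x y
    using that by (simp add: PL_def)
  have mH: "(x, y) \<in> ?P" if "0 \<le> x" "x \<le> ?M" "2 \<le> y" "y \<le> 3" for x y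
    using that by (simp add: PL_def)
  have col: "\<forall>n::nat. int n \<le> 3 \<longrightarrow> (f (0, int n), f (0,0)) \<in> E\<^sup>* \<and> (f (1, int n), f (0,0)) \<in> E\<^sup>*"
  proof
    fix n :: nat
    show "int n \<le> 3 \<longrightarrow> (f (0, int n), f (0,0)) \<in> E\<^sup>* \<and> (f (1, int n), f (0,0)) \<in> E\<^sup>*"
    proof (induction n)
      case 0
      have "(f (1, 0), f (0, 0)) \<in> E" by (rule E) (auto intro: mV simp: adj_def adjd_def)
      then show ?case by simp
    next
      case (Suc n)
      show ?case
      proof
        assume h: "int (Suc n) \<le> 3"
        then have IH: "(f (0, int n), f (0,0)) \<in> E\<^sup>*" "(f (1, int n), f (0,0)) \<in> E\<^sup>*" using Suc.IH by simp_all
        have e0: "(f (0, int n + 1), f (0, int n)) \<in> E" by (rule E) (use h in \<open>auto intro!: mV simp: adj_def adjd_def\<close>)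
        have e1: "(f (1, int n + 1), f (1, int n)) \<in> E" by (rule E) (use h in \<open>auto intro!: mV simp: adj_def adjd_def\<close>)
        show "(f (0, int (Suc n)), f (0,0)) \<in> E\<^sup>* \<and> (f (1, int (Suc n)), f (0,0)) \<in> E\<^sup>*"
          using converse_rtrancl_into_rtrancl[OF e0 IH(1)] converse_rtrancl_into_rtrancl[OF e1 IH(2)]
          by (simp add: add.commute)
      qed
    qed
  qed
  have colx: "(f (x, y), f (0,0)) \<in> E\<^sup>*" if "0 \<le> x" "x \<le> 1" "0 \<le> y" "y \<le> 3" for x y
  proof -
    have "x = 0 \<or> x = 1" using that by auto
    moreover have "int (nat y) \<le> 3" using that by simp
    ultimately show ?thesis using col[rule_format, of "nat y"] that by auto
  qed
  have row: "\<forall>n::nat. int n \<le> ?M \<longrightarrow> (f (int n, 2), f (0,0)) \<in> E\<^sup>* \<and> (f (int n, 3), f (0,0)) \<in> E\<^sup>*"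
  proof
    fix n :: nat
    show "int n \<le> ?M \<longrightarrow> (f (int n, 2), f (0,0)) \<in> E\<^sup>* \<and> (f (int n, 3), f (0,0)) \<in> E\<^sup>*"
    proof (induction n)
      case 0
      show ?case using colx[of 0 2] colx[of 0 3] by simp
    next
      case (Suc n)
      show ?case
      proof
        assume h: "int (Suc n) \<le> ?M"
        then have IH: "(f (int n, 2), f (0,0)) \<in> E\<^sup>*" "(f (int n, 3), f (0,0)) \<in> E\<^sup>*" using Suc.IH by simp_all
        have e0: "(f (int n + 1, 2), f (int n, 2)) \<in> E" by (rule E) (use h in \<open>auto intro!: mH simp: adj_def adjd_def\<close>)
        have e1: "(f (int n + 1, 3), f (int n, 3)) \<in> E" by (rule E) (use h in \<open>auto intro!: mH simp: adj_def adjd_def\<close>)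
        show "(f (int (Suc n), 2), f (0,0)) \<in> E\<^sup>* \<and> (f (int (Suc n), 3), f (0,0)) \<in> E\<^sup>*"
          using converse_rtrancl_into_rtrancl[OF e0 IH(1)] converse_rtrancl_into_rtrancl[OF e1 IH(2)]
          by (simp add: add.commute)
      qed
    qed
  qed
  have rowx: "(f (x, 2), f (0,0)) \<in> E\<^sup>*" "(f (x, 3), f (0,0)) \<in> E\<^sup>*" if "0 \<le> x" "x \<le> ?M" for x
    using row[rule_format, of "nat x"] that by simp_all
  obtain x y where zz: "z = (x, y)" by force
  have "(0 \<le> x \<and> x \<le> 1 \<and> 0 \<le> y \<and> y \<le> 3) \<or> (0 \<le> x \<and> x \<le> ?M \<and> 2 \<le> y \<and> y \<le> 3)
     \<or> (\<exists>i\<in>A. 1 \<le> i \<and> i \<le> N \<and> ((x = 4 * int i \<and> y = 1) \<or> (x = 4 * int i + 1 \<and> (y = 1 \<or> y = 0))))"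
    using z zz by (simp add: PL_def)
  then show ?thesis
  proof (elim disjE)
    assume "0 \<le> x \<and> x \<le> 1 \<and> 0 \<le> y \<and> y \<le> 3"
    then show ?thesis using colx zz by auto
  next
    assume h: "0 \<le> x \<and> x \<le> ?M \<and> 2 \<le> y \<and> y \<le> 3"
    then have "y = 2 \<or> y = 3" by auto
    then show ?thesis using rowx h zz by auto
  next
    assume "\<exists>i\<in>A. 1 \<le> i \<and> i \<le> N \<and> ((x = 4 * int i \<and> y = 1) \<or> (x = 4 * int i + 1 \<and> (y = 1 \<or> y = 0)))"
    then obtain i where i: "i \<in> A" "1 \<le> i" "i \<le> N" and c: "(x = 4 * int i \<and> y = 1) \<or> (x = 4 * int i + 1 \<and> (y = 1 \<or> y = 0))"
      by blast
    have mT: "(4 * int i, 1) \<in> ?P" "(4 * int i + 1, 1) \<in> ?P" "(4 * int i + 1, 0) \<in> ?P"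
      using i unfolding PL_def by auto
    have r1: "(f (4 * int i, 1), f (0,0)) \<in> E\<^sup>*"
    proof -
      have "(f (4 * int i, 1), f (4 * int i, 2)) \<in> E" by (rule E) (use i mT in \<open>auto intro!: mH simp: adj_def adjd_def\<close>)
      moreover have "(f (4 * int i, 2), f (0,0)) \<in> E\<^sup>*" by (rule rowx(1)) (use i in auto)
      ultimately show ?thesis by (rule converse_rtrancl_into_rtrancl)
    qed
    have r2: "(f (4 * int i + 1, 1), f (0,0)) \<in> E\<^sup>*"
    proof -
      have "(f (4 * int i + 1, 1), f (4 * int i + 1, 2)) \<in> E" by (rule E) (use i mT in \<open>auto intro!: mH simp: adj_def adjd_def\<close>)
      moreover have "(f (4 * int i + 1, 2), f (0,0)) \<in> E\<^sup>*" by (rule rowx(1)) (use i in auto)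
      ultimately show ?thesis by (rule converse_rtrancl_into_rtrancl)
    qed
    have r3: "(f (4 * int i + 1, 0), f (0,0)) \<in> E\<^sup>*"
    proof -
      have "(f (4 * int i + 1, 0), f (4 * int i + 1, 1)) \<in> E" by (rule E) (use i mT in \<open>auto simp: adj_def adjd_def\<close>)
      then show ?thesis using r2 by (rule converse_rtrancl_into_rtrancl)
    qed
    show ?thesis using c r1 r2 r3 zz by auto
  qed
qed


lemma edge_L: "a \<in> PL N A \<Longrightarrow> b \<in> PL N A \<Longrightarrow> adj a b \<Longrightarrow> (Inl (enc a), Inl (enc b)) \<in> edges (G N A B)"
  by (simp add: edges_G_LL)

lemma edge_R:
  assumes "a \<in> PR N B" "b \<in> PR N B" "adj a b"
  shows "(glue_map SS (enc a), glue_map SS (enc b)) \<in> edges (G N A B)"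
proof -
  have "(enc a, enc b) \<in> edges (Rg N B)" using assms by (simp add: edges_Rg)
  then show ?thesis unfolding edges_G_raw by blast
qed

lemma gm_enc: "glue_map SS (enc c) = (if c \<in> S0 then Inl (enc c) else Inr (enc c))"
  by (simp add: glue_map_def mem_SS)

lemma gm_V: "c \<in> PR N B \<Longrightarrow> glue_map SS (enc c) \<in> verts (G N A B)"
  using S0_PL[of N A] by (auto simp: gm_enc verts_G_Inl verts_G_Inr)

lemma gm_inj: "glue_map SS (enc c) = glue_map SS (enc c') \<Longrightarrow> c = c'"
  by (auto simp: gm_enc split: if_splits)

lemma okp_sym: "okp x y = okp y x"
  by (cases x; cases y) (simp_all add: okp_def)

lemma sym_G: "sym (edges (G N A B))"
  unfolding sym_def
proof (intro allI impI)
  fix x y assume "(x, y) \<in> edges (G N A B)"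
  then show "(y, x) \<in> edges (G N A B)" unfolding edges_G using adj_sym okp_sym by blast
qed

lemma simple_G: "simple_graph (G N A B)"
proof -
  have fin: "finite (verts (G N A B))"
    by (simp add: verts_glue verts_Lg verts_Rg finite_PL finite_PR)
  have sub: "edges (G N A B) \<subseteq> verts (G N A B) \<times> verts (G N A B)"
    using edges_G by auto
  have irr: "irrefl (edges (G N A B))"
    unfolding irrefl_def edges_G using adj_irrefl by blast
  show ?thesis unfolding simple_graph_def using fin sub irr sym_G by blast
qed

lemma V_cases:
  assumes "x \<in> verts (G N A B)"
  obtains z where "z \<in> PL N A" "x = Inl (enc z)" | z where "z \<in> PR N B" "z \<notin> S0" "x = Inr (enc z)"
proof (cases x)
  case (Inl n)
  then show ?thesis using that(1)[of "dec n"] assms by (simp add: verts_G_Inl)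
next
  case (Inr n)
  then show ?thesis using that(2)[of "dec n"] assms by (simp add: verts_G_Inr)
qed

lemma connected_G: "connected_graph (G N A B)"
proof -
  let ?E = "edges (G N A B)"
  define b0 where "b0 = (Inl (enc (0,0)) :: nat + nat)"
  have toB: "(x, b0) \<in> ?E\<^sup>*" if x: "x \<in> verts (G N A B)" for x
  proof -
    from x show ?thesis
    proof (cases rule: V_cases)
      case (1 z)
      have "((\<lambda>z. Inl (enc z) :: nat + nat) z, (\<lambda>z. Inl (enc z) :: nat + nat) (0,0)) \<in> ?E\<^sup>*"
        by (rule reach_PL[where N = N and A = A]) (auto intro: edge_L simp: 1)
      then show ?thesis using 1 by (simp add: b0_def)
    next
      case (2 z)
      let ?f = "\<lambda>z. glue_map SS (enc (sig z))"
      have "(?f (sig z), ?f (0,0)) \<in> ?E\<^sup>*"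
      proof (rule reach_PL[where N = N and A = B])
        fix a b assume "a \<in> PL N B" "b \<in> PL N B" "adj a b"
        then show "(?f a, ?f b) \<in> ?E" by (intro edge_R) (simp_all add: PR_def adj_sig)
      next
        show "sig z \<in> PL N B" using 2 by (simp add: PR_def)
      qed
      moreover have "?f (sig z) = x" using 2 by (simp add: gm_enc)
      moreover have "?f (0,0) = b0" by (simp add: gm_enc b0_def sig_def S0_def)
      ultimately show ?thesis by simp
    qed
  qed
  have symE: "sym (?E\<^sup>*)" by (rule sym_rtrancl[OF sym_G])
  show ?thesis unfolding connected_graph_def
  proof (intro ballI)
    fix x y assume "x \<in> verts (G N A B)" "y \<in> verts (G N A B)"
    then have "(x, b0) \<in> ?E\<^sup>*" "(b0, y) \<in> ?E\<^sup>*" using toB symE by (auto dest: symD)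
    then show "(x, y) \<in> ?E\<^sup>*" by (rule rtrancl_trans)
  qed
qed

lemma card_G: "card (verts (G N A B)) \<le> 32 * N + 24"
proof -
  have "card (verts (G N A B)) \<le> card (Inl ` enc ` PL N A :: (nat + nat) set) + card (Inr ` (enc ` PR N B - SS) :: (nat + nat) set)"
    unfolding verts_glue verts_Lg verts_Rg by (rule card_Un_le)
  also have "\<dots> \<le> card (PL N A) + card (PR N B)"
  proof (rule add_mono)
    show "card (Inl ` enc ` PL N A :: (nat + nat) set) \<le> card (PL N A)"
      by (metis card_image_le finite_PL finite_imageI le_trans)
    have "card (Inr ` (enc ` PR N B - SS) :: (nat + nat) set) \<le> card (enc ` PR N B - SS)"
      by (rule card_image_le) (simp add: finite_PR)
    also have "\<dots> \<le> card (enc ` PR N B)" by (rule card_mono) (auto simp: finite_PR)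
    also have "\<dots> \<le> card (PR N B)" by (rule card_image_le[OF finite_PR])
    finally show "card (Inr ` (enc ` PR N B - SS) :: (nat + nat) set) \<le> card (PR N B)" .
  qed
  also have "\<dots> \<le> 32 * N + 24" using card_PL[of N A] card_PR[of N B] by simp
  finally show ?thesis .
qed

definition W0 :: "(nat + nat) set" where
  "W0 = Inl ` enc ` {(0,0),(1,0),(0,1),(1,1)} \<union> Inr ` enc ` {(1,-1),(2,-1)}"

lemma W0_V: "W0 \<subseteq> verts (G N A B)"
  unfolding W0_def by (auto simp: verts_G_Inl verts_G_Inr PL_def PR_def sig_def S0_def)

lemma pts: "(0,0) \<in> PL N A" "(1,0) \<in> PL N A" "(0,1) \<in> PL N A" "(1,1) \<in> PL N A"
   "(1,-1) \<in> PR N B" "(2,-1) \<in> PR N B" "(1::int,-1::int) \<notin> S0" "(2::int,-1::int) \<notin> S0"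
   "(0::int,0::int) \<in> S0" "(1::int,0::int) \<in> S0"
  by (auto simp: PL_def PR_def sig_def S0_def)

lemma adjs: "adj (0,0) (0,1)" "adj (1,0) (1,1)" "adj (0,0) (1,-1)" "adj (1,0) (2,-1)"
  by (simp_all add: adj_def adjd_def)

lemma nbhd_G: "closed_nbhd (G N A B) (Inl ` SS) = W0"
proof (rule set_eqI, rule iffI)
  fix x assume "x \<in> closed_nbhd (G N A B) (Inl ` SS)"
  then have "x \<in> Inl ` SS \<or> (x \<in> verts (G N A B) \<and> (\<exists>t\<in>Inl ` SS. (t, x) \<in> edges (G N A B)))"
    unfolding closed_nbhd_def by blast
  then show "x \<in> W0"
  proof (elim disjE conjE bexE)
    assume "x \<in> Inl ` SS" then show ?thesis unfolding W0_def SS_def S0_def by auto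
  next
    fix t assume xV: "x \<in> verts (G N A B)" and t: "t \<in> Inl ` SS" and e: "(t, x) \<in> edges (G N A B)"
    obtain n where n: "t = Inl n" "dec n \<in> S0" using t by (auto simp: mem_SS)
    from xV show ?thesis
    proof (cases rule: V_cases)
      case (1 z)
      then have "adj (dec n) z" "z \<in> PL N A" using e n by (simp_all add: edges_G_LL)
      then have "z \<in> {(0,0),(1,0),(0,1),(1,1)}" using nbL n by blast
      then show ?thesis using 1 unfolding W0_def by blast
    next
      case (2 z)
      then have "adj (dec n) z" using e n by (simp add: edges_G_LR)
      then have "z \<in> {(1,-1),(2,-1)}" using nbR 2 n by blast
      then show ?thesis using 2 unfolding W0_def by blast
    qed
  qed
next
  fix x assume x: "x \<in> W0"
  have V: "x \<in> verts (G N A B)" using x W0_V by blast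
  have s00: "Inl (enc (0,0)) \<in> Inl ` SS" "Inl (enc (1,0)) \<in> Inl ` SS" by (auto simp: SS_def S0_def)
  have "x \<in> Inl ` SS \<or> (\<exists>t\<in>Inl ` SS. (t, x) \<in> edges (G N A B))"
  proof -
    consider "x = Inl (enc (0,0))" | "x = Inl (enc (1,0))" | "x = Inl (enc (0,1))" | "x = Inl (enc (1,1))"
      | "x = Inr (enc (1,-1))" | "x = Inr (enc (2,-1))" using x unfolding W0_def by blast
    then show ?thesis
    proof cases
      case 1 then show ?thesis using s00(1) by (intro disjI1) simp
    next
      case 2 then show ?thesis using s00(2) by (intro disjI1) simp
    next
      case 3
      have e: "(Inl (enc (0,0)), x) \<in> edges (G N A B)" using 3 pts adjs by (simp add: edges_G_LL)
      show ?thesis using e s00(1) by (intro disjI2 bexI[where x="Inl (enc (0,0))"])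
    next
      case 4
      have e: "(Inl (enc (1,0)), x) \<in> edges (G N A B)" using 4 pts adjs by (simp add: edges_G_LL)
      show ?thesis using e s00(2) by (intro disjI2 bexI[where x="Inl (enc (1,0))"])
    next
      case 5
      have e: "(Inl (enc (0,0)), x) \<in> edges (G N A B)" using 5 pts adjs by (simp add: edges_G_LR)
      show ?thesis using e s00(1) by (intro disjI2 bexI[where x="Inl (enc (0,0))"])
    next
      case 6
      have e: "(Inl (enc (1,0)), x) \<in> edges (G N A B)" using 6 pts adjs by (simp add: edges_G_LR)
      show ?thesis using e s00(2) by (intro disjI2 bexI[where x="Inl (enc (1,0))"])
    qed
  qed
  then show "x \<in> closed_nbhd (G N A B) (Inl ` SS)" using V unfolding closed_nbhd_def by auto
qed

lemma card_W0: "card W0 \<le> 6"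
  unfolding W0_def by (simp add: card_insert_if)

lemma iso_G: "\<exists>f. induced_iso (G N A B) (closed_nbhd (G N A B) (Inl ` SS))
                              (G N A' B') (closed_nbhd (G N A' B') (Inl ` SS)) f
                  \<and> (\<forall>x\<in>SS. f (Inl x) = Inl x)"
proof (intro exI[of _ id] conjI)
  show "\<forall>x\<in>SS. id (Inl x) = Inl x" by simp
  have "\<forall>x\<in>W0. \<forall>y\<in>W0. (x, y) \<in> edges (G N A B) \<longleftrightarrow> (id x, id y) \<in> edges (G N A' B')"
    using W0_V[of N A B] W0_V[of N A' B'] by (auto simp: edges_G)
  then show "induced_iso (G N A B) (closed_nbhd (G N A B) (Inl ` SS))
                              (G N A' B') (closed_nbhd (G N A' B') (Inl ` SS)) id"
    unfolding induced_iso_def nbhd_G by simp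
qed

section \<open>Realizability\<close>

lemma okp_sep:
  assumes AB: "A \<inter> B = {}" and x: "x \<in> verts (G N A B)" and y: "y \<in> verts (G N A B)" and a: "adj (co x) (co y)"
  shows "okp x y"
proof -
  have key: "dec n \<in> S0" if "Inl n \<in> verts (G N A B)" "Inr m \<in> verts (G N A B)" "adj (dec n) (dec m)" for n m
  proof (rule ccontr)
    assume "dec n \<notin> S0"
    then have "\<not> adj (dec n) (dec m)" using sep[OF AB] that(1,2) by (simp add: verts_G_Inl verts_G_Inr)
    then show False using that(3) by simp
  qed
  show ?thesis using x y a key by (cases x; cases y) (auto simp: okp_def co_def intro: adj_sym)
qed

lemma co_inj:
  assumes AB: "A \<inter> B = {}" and x: "x \<in> verts (G N A B)" and y: "y \<in> verts (G N A B)" and e: "co x = co y"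
  shows "x = y"
proof -
  have key: False if "Inl n \<in> verts (G N A B)" "Inr m \<in> verts (G N A B)" "dec n = dec m" for n m
  proof -
    have "dec m \<notin> S0" "dec m \<in> PR N B" "dec n \<in> PL N A" using that(1,2) by (simp_all add: verts_G_Inl verts_G_Inr)
    then show False using sep[OF AB, of "dec n" N "dec m"] that(3) by simp
  qed
  have dinj: "a = b" if "dec a = dec b" for a b by (metis that enc_dec)
  show ?thesis
  proof (cases x)
    case (Inl a)
    show ?thesis
    proof (cases y)
      case (Inl b)
      then show ?thesis using \<open>x = Inl a\<close> e dinj by (simp add: co_def)
    next
      case (Inr b)
      then show ?thesis using \<open>x = Inl a\<close> e key x y by (simp add: co_def)
    qed
  next
    case (Inr a)
    show ?thesis
    proof (cases y)
      case (Inl b)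
      then show ?thesis using \<open>x = Inr a\<close> e key[of b a] x y by (simp add: co_def)
    next
      case (Inr b)
      then show ?thesis using \<open>x = Inr a\<close> e dinj by (simp add: co_def)
    qed
  qed
qed

lemma ud_if:
  assumes AB: "A \<inter> B = {}"
  shows "unit_distance_graph (G N A B)"
  unfolding unit_distance_graph_def
proof (intro conjI exI[of _ "\<lambda>x. emb (co x)"])
  show "simple_graph (G N A B)" by (rule simple_G)
  show "inj_on (\<lambda>x. emb (co x)) (verts (G N A B))"
    unfolding inj_on_def using co_inj[OF AB] emb_inj by blast
  show "\<forall>x\<in>verts (G N A B). \<forall>y\<in>verts (G N A B). (x, y) \<in> edges (G N A B) \<longleftrightarrow> dist (emb (co x)) (emb (co y)) = 1"
    using okp_sep[OF AB] by (auto simp: edges_G emb_dist)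
qed

lemma ud_only:
  assumes ud: "unit_distance_graph (G N A B)" and A: "A \<subseteq> {1..N}" and B: "B \<subseteq> {1..N}"
  shows "A \<inter> B = {}"
proof (rule ccontr)
  assume "A \<inter> B \<noteq> {}"
  then obtain i where iA: "i \<in> A" and iB: "i \<in> B" by blast
  have ib: "1 \<le> i" "i \<le> N" using iA A by auto
  obtain p :: "nat + nat \<Rightarrow> real^2" where inj: "inj_on p (verts (G N A B))"
    and iff: "\<forall>x\<in>verts (G N A B). \<forall>y\<in>verts (G N A B). (x, y) \<in> edges (G N A B) \<longleftrightarrow> dist (p x) (p y) = 1"
    using ud unfolding unit_distance_graph_def by blast
  define q where "q z = p (Inl (enc z))" for z
  define q' where "q' z = p (glue_map SS (enc (sig z)))" for z
  have VL: "Inl (enc z) \<in> verts (G N A B)" if "z \<in> PL N A" for z using that by (simp add: verts_G_Inl)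
  have VR: "glue_map SS (enc (sig z)) \<in> verts (G N A B)" if "z \<in> PL N B" for z
    using that by (intro gm_V) (simp add: PR_def)
  have injq: "inj_on q (PL N A)"
    unfolding inj_on_def q_def using inj VL by (metis enc_eq inj_on_eq_iff sum.inject(1))
  have Dq: "dist (q a) (q b) = 1" if "a \<in> PL N A" "b \<in> PL N A" "adj a b" for a b
    using iff VL[OF that(1)] VL[OF that(2)] edge_L[OF that, of B] unfolding q_def by blast
  have injq': "inj_on q' (PL N B)"
    unfolding inj_on_def q'_def using inj VR gm_inj by (metis inj_on_eq_iff sig_inj)
  have Dq': "dist (q' a) (q' b) = 1" if "a \<in> PL N B" "b \<in> PL N B" "adj a b" for a b
  proof -
    have "(glue_map SS (enc (sig a)), glue_map SS (enc (sig b))) \<in> edges (G N A B)"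
      using that by (intro edge_R) (simp_all add: PR_def adj_sig)
    then show ?thesis using iff VR[OF that(1)] VR[OF that(2)] unfolding q'_def by blast
  qed
  define t where "t = (4 * int i + 1, (0::int))"
  have r1: "q t = phi q t" unfolding t_def by (rule rigid[OF injq Dq iA ib])
  have r2: "q' t = phi q' t" unfolding t_def by (rule rigid[OF injq' Dq' iB ib])
  have e00: "q' (0,0) = q (0,0)" "q' (1,0) = q (1,0)"
    unfolding q_def q'_def by (simp_all add: gm_enc sig_def S0_def)
  have "phi q t = phi q' t" unfolding phi_def e00 t_def by simp
  then have "p (Inl (enc t)) = p (glue_map SS (enc (sig t)))" using r1 r2 unfolding q_def q'_def by simp
  moreover have st: "sig t = t" "t \<notin> S0" using ib by (simp_all add: t_def sig_def S0_def)
  ultimately have peq: "p (Inl (enc t)) = p (Inr (enc t))" by (simp add: gm_enc)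
  have tA: "t \<in> PL N A" using iA ib by (auto simp: t_def PL_def)
  have tB: "t \<in> PL N B" using iB ib by (auto simp: t_def PL_def)
  have v1: "Inl (enc t) \<in> verts (G N A B)" using VL[OF tA] .
  have v2: "Inr (enc t) \<in> verts (G N A B)" using VR[OF tB] st by (simp add: gm_enc)
  have "Inl (enc t) = (Inr (enc t) :: nat + nat)" using inj v1 v2 peq by (meson inj_on_eq_iff)
  then show False by simp
qed

theorem theorem5p3:
  shows "disjointness_expressing unit_distance_graph 6 1"
  unfolding disjointness_expressing_def
proof (intro exI[of _ "56::real"] conjI allI impI)
  show "(0::real) < 56" by simp
next
  fix N :: nat assume N: "0 < N"
  have c1: "\<forall>X. X \<subseteq> {1..N} \<longrightarrow> simple_graph (Lg N X) \<and> simple_graph (Rg N X) \<and> SS \<subseteq> verts (Lg N X) \<and> SS \<subseteq> verts (Rg N X)"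
    using simple_Lg simple_Rg SS_sub_L SS_sub_R by blast
  have pw: "real N powr (1 / real (1::nat)) = real N" by simp
  have cardb: "real (card (verts (G N A B))) \<le> 56 * real N powr (1 / real (1::nat))" for A B
  proof -
    have "card (verts (G N A B)) \<le> 32 * N + 24" by (rule card_G)
    also have "\<dots> \<le> 56 * N" using N by simp
    finally have "real (card (verts (G N A B))) \<le> 56 * real N" by linarith
    then show ?thesis unfolding pw .
  qed
  have c2: "\<forall>A B. A \<subseteq> {1..N} \<longrightarrow> B \<subseteq> {1..N} \<longrightarrow> connected_graph (G N A B) \<and>
      real (card (verts (G N A B))) \<le> 56 * real N powr (1 / real (1::nat)) \<and>
      card (closed_nbhd (G N A B) (Inl ` SS)) \<le> 6 \<and>
      (unit_distance_graph (G N A B) \<longleftrightarrow> A \<inter> B = {})"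
  proof (intro allI impI conjI)
    fix A B assume A: "A \<subseteq> {1..N}" and B: "B \<subseteq> {1..N}"
    show "connected_graph (G N A B)" by (rule connected_G)
    show "real (card (verts (G N A B))) \<le> 56 * real N powr (1 / real (1::nat))" by (rule cardb)
    show "card (closed_nbhd (G N A B) (Inl ` SS)) \<le> 6" unfolding nbhd_G by (rule card_W0)
    show "unit_distance_graph (G N A B) \<longleftrightarrow> A \<inter> B = {}" using ud_if ud_only A B by blast
  qed
  have c3: "\<forall>A A' B B'. A \<subseteq> {1..N} \<longrightarrow> A' \<subseteq> {1..N} \<longrightarrow> B \<subseteq> {1..N} \<longrightarrow> B' \<subseteq> {1..N} \<longrightarrow>
             (\<exists>f. induced_iso (G N A B) (closed_nbhd (G N A B) (Inl ` SS))
                              (G N A' B') (closed_nbhd (G N A' B') (Inl ` SS)) f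
                  \<and> (\<forall>x\<in>SS. f (Inl x) = Inl x))"
    by (intro allI impI) (rule iso_G)
  show "\<exists>(S::nat set) (L::nat set \<Rightarrow> nat graph) (R::nat set \<Rightarrow> nat graph). (\<forall>X. X \<subseteq> {1..N} \<longrightarrow> simple_graph (L X) \<and> simple_graph (R X) \<and> S \<subseteq> verts (L X) \<and> S \<subseteq> verts (R X)) \<and>
          (\<forall>A B. A \<subseteq> {1..N} \<longrightarrow> B \<subseteq> {1..N} \<longrightarrow>
             connected_graph (glue (L A) (R B) S) \<and>
             real (card (verts (glue (L A) (R B) S))) \<le> 56 * real N powr (1 / real (1::nat)) \<and>
             card (closed_nbhd (glue (L A) (R B) S) (Inl ` S)) \<le> 6 \<and>
             (unit_distance_graph (glue (L A) (R B) S) \<longleftrightarrow> A \<inter> B = {})) \<and>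
          (\<forall>A A' B B'. A \<subseteq> {1..N} \<longrightarrow> A' \<subseteq> {1..N} \<longrightarrow> B \<subseteq> {1..N} \<longrightarrow> B' \<subseteq> {1..N} \<longrightarrow>
             (\<exists>f. induced_iso (glue (L A) (R B) S)
                              (closed_nbhd (glue (L A) (R B) S) (Inl ` S))
                              (glue (L A') (R B') S)
                              (closed_nbhd (glue (L A') (R B') S) (Inl ` S)) f
                  \<and> (\<forall>x\<in>S. f (Inl x) = Inl x)))"
    apply (rule exI[where x=SS])
    apply (rule exI[where x="Lg N"])
    apply (rule exI[where x="Rg N"])
    apply (intro conjI)
      apply (rule c1)
     apply (rule c2)
    apply (rule c3)
    done
qed


end
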